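(* Let $P$ be an operad and $n\ge1$. The complex $(\Omega(PA),d)$ is exact, i.e. has zero cohomology in every degree.
   Context: All vector spaces over $\mathbb{Q}$. An operad consists of vector spaces $P[j]$ with $\Sigma_j$-actions, $P[0]=0$, with associative equivariant substitution and a unit (only the species structure is used below). Let $W$ be the super vector space with even basis $x_1,\dots,x_n$ and odd basis $dx_1,\dots,dx_n$. Set $\Omega(PA)=\bigoplus_{j\ge1}(P[j]\otimes W^{\otimes j})_{\Sigma_j}$, where $\Sigma_j$ acts on $W^{\otimes j}$ by permuting factors with the Koszul sign rule (transposing two odd factors gives a sign); it is $\mathbb{Z}$-graded by the number of odd factors, with $\Omega^0(PA)=PA=\bigoplus_{j\ge1}(P[j]\otimes V^{\otimes j})_{\Sigma_j}$, $V=\mathrm{span}(x_i)$. The differential is $d(p\otimes w_1\otimes\cdots\otimes w_j)=\sum_{k=1}^j(-1)^{\epsilon_k}\,p\otimes w_1\otimes\cdots\otimes d(w_k)\otimes\cdots\otimes w_j$, where $d(x_i)=dx_i$, $d(dx_i)=0$ and $\epsilon_k$ is the number of odd $w_l$ with $l<k$ (so $d$ is the odd superderivation of the free $P$-superalgebra with $d^2=0$). *)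

theory Defs
  imports Complex_Main "HOL-Combinatorics.Permutations"
begin

text \<open>Letters of the super vector space W: (i, False) is the even basis vector x_(i+1),
 (i, True) is the odd basis vector dx_(i+1), for i < n.  A word of length j is a basis
 tensor of W^{\<otimes>j}.  An element of the direct sum over j of P[j] \<otimes> W^{\<otimes>j}
 is represented by its coefficient function F, with F w \<in> P (length w),
 i.e. F = \<Sum>_w F w \<otimes> w.\<close>

type_synonym letter = "nat \<times> bool"
type_synonym 'a chain = "letter list \<Rightarrow> 'a"

definition odd_count :: "letter list \<Rightarrow> nat" where
  "odd_count w = length (filter snd w)"

definition species ::
  "(rat \<Rightarrow> 'a::ab_group_add \<Rightarrow> 'a) \<Rightarrow> (nat \<Rightarrow> 'a set) \<Rightarrow> (nat \<Rightarrow> (nat \<Rightarrow> nat) \<Rightarrow> 'a \<Rightarrow> 'a) \<Rightarrow> bool" where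
  "species scale P act \<longleftrightarrow>
     vector_space scale \<and>
     (\<forall>j. module.subspace scale (P j)) \<and>
     P 0 = {0} \<and>
     (\<forall>j \<sigma>. \<sigma> permutes {0..<j} \<longrightarrow>
        (\<forall>p\<in>P j. act j \<sigma> p \<in> P j) \<and>
        (\<forall>p\<in>P j. \<forall>q\<in>P j. act j \<sigma> (p + q) = act j \<sigma> p + act j \<sigma> q) \<and>
        (\<forall>c. \<forall>p\<in>P j. act j \<sigma> (scale c p) = scale c (act j \<sigma> p))) \<and>
     (\<forall>j. \<forall>p\<in>P j. act j id p = p) \<and>
     (\<forall>j \<sigma> \<tau>. \<sigma> permutes {0..<j} \<longrightarrow> \<tau> permutes {0..<j} \<longrightarrow>
        (\<forall>p\<in>P j. act j (\<sigma> \<circ> \<tau>) p = act j \<sigma> (act j \<tau> p)))"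

text \<open>Elements of \<Omega>-before-coinvariants: finitely supported, letters indexed below n.\<close>
definition is_chain :: "nat \<Rightarrow> (nat \<Rightarrow> 'a::zero set) \<Rightarrow> 'a chain \<Rightarrow> bool" where
  "is_chain n P F \<longleftrightarrow> finite {w. F w \<noteq> 0} \<and> (\<forall>w. F w \<in> P (length w)) \<and>
     (\<forall>w. F w \<noteq> 0 \<longrightarrow> (\<forall>l\<in>set w. fst l < n))"

definition chain_deg :: "nat \<Rightarrow> (nat \<Rightarrow> 'a::zero set) \<Rightarrow> nat \<Rightarrow> 'a chain set" where
  "chain_deg n P k = {F. is_chain n P F \<and> (\<forall>w. F w \<noteq> 0 \<longrightarrow> odd_count w = k)}"

text \<open>The differential: d(p \<otimes> w_1..w_j) = \<Sum>_k (-1)^{\<epsilon>_k} p \<otimes> w_1..d w_k..w_j,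
 written on coefficient functions: the coefficient of a word v collects, for every odd
 position k of v, the coefficient of v with that letter replaced by its even partner.\<close>
definition dR :: "('a::ab_group_add) chain \<Rightarrow> 'a chain" where
  "dR F v = (\<Sum>k\<in>{k. k < length v \<and> snd (v ! k)}.
      (if even (odd_count (take k v)) then F (v[k := (fst (v ! k), False)])
       else - F (v[k := (fst (v ! k), False)])))"

text \<open>Koszul sign of the left action of \<sigma> on the basis tensor w
 ((\<sigma>\<cdot>w)_(\<sigma> i) = w_i): parity of inversions of \<sigma> among odd positions.\<close>
definition koszul_odd :: "(nat \<Rightarrow> nat) \<Rightarrow> letter list \<Rightarrow> bool" where
  "koszul_odd \<sigma> w \<longleftrightarrow> odd (card {(a, b). a < b \<and> b < length w \<and> snd (w ! a) \<and> snd (w ! b) \<and> \<sigma> b < \<sigma> a})"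

text \<open>Diagonal action of \<sigma> on P[j] \<otimes> W^{\<otimes>j}:
 \<sigma>\<cdot>(p \<otimes> u) = \<plusminus> (\<sigma>\<cdot>p) \<otimes> (\<sigma>\<cdot>u); on coefficients, the coefficient of v = \<sigma>\<cdot>u
 where u_i = v_(\<sigma> i).\<close>
definition sact :: "(nat \<Rightarrow> (nat \<Rightarrow> nat) \<Rightarrow> 'a \<Rightarrow> 'a) \<Rightarrow> nat \<Rightarrow> (nat \<Rightarrow> nat) \<Rightarrow> ('a::ab_group_add) chain \<Rightarrow> 'a chain" where
  "sact act j \<sigma> F v =
     (if length v = j then
        (let u = map (\<lambda>i. v ! \<sigma> i) [0..<j] in
          if koszul_odd \<sigma> u then - act j \<sigma> (F u) else act j \<sigma> (F u))
      else 0)"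

text \<open>The subspace spanned by all x - \<sigma>\<cdot>x; \<Omega>(PA) is the quotient by it.\<close>
inductive_set coinv_rel :: "(rat \<Rightarrow> 'a::ab_group_add \<Rightarrow> 'a) \<Rightarrow> (nat \<Rightarrow> (nat \<Rightarrow> nat) \<Rightarrow> 'a \<Rightarrow> 'a) \<Rightarrow> nat \<Rightarrow> (nat \<Rightarrow> 'a set) \<Rightarrow> 'a chain set"
  for scale act n P where
  zero: "(\<lambda>_. 0) \<in> coinv_rel scale act n P"
| add: "F \<in> coinv_rel scale act n P \<Longrightarrow> G \<in> coinv_rel scale act n P \<Longrightarrow> (\<lambda>w. F w + G w) \<in> coinv_rel scale act n P"
| smult: "F \<in> coinv_rel scale act n P \<Longrightarrow> (\<lambda>w. scale c (F w)) \<in> coinv_rel scale act n P"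
| gen: "is_chain n P H \<Longrightarrow> (\<forall>w. H w \<noteq> 0 \<longrightarrow> length w = j) \<Longrightarrow> \<sigma> permutes {0..<j} \<Longrightarrow>
        (\<lambda>w. H w - sact act j \<sigma> H w) \<in> coinv_rel scale act n P"

end

theory Submission
  imports Defs
begin

definition sg :: "nat \<Rightarrow> 'a::ab_group_add \<Rightarrow> 'a" where
  "sg c x = (if even c then x else - x)"

lemma sg_sg[simp]: "sg a (sg b x) = sg (a + b) x"
  by (auto simp: sg_def)
lemma sg_add: "sg a (x + y) = sg a x + sg a y"
  by (auto simp: sg_def)
lemma sg_0[simp]: "sg a 0 = 0"
  by (auto simp: sg_def)
lemma sg_sum: "sg a (sum f A) = (\<Sum>x\<in>A. sg a (f x))"
  by (auto simp: sg_def sum_negf)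
lemma sg_minus: "sg a (- x) = - sg a x"
  by (auto simp: sg_def)
lemma sg_Suc: "sg (Suc a) x = - sg a x"
  by (auto simp: sg_def)
lemma sg_same[simp]: "sg a (sg a x) = x"
  by (auto simp: sg_def)

definition Od :: "letter list \<Rightarrow> nat set" where "Od v = {k. k < length v \<and> snd (v ! k)}"
definition Ev :: "letter list \<Rightarrow> nat set" where "Ev v = {k. k < length v \<and> \<not> snd (v ! k)}"

lemma fin_Od[simp]: "finite (Od v)" and fin_Ev[simp]: "finite (Ev v)"
  by (auto simp: Od_def Ev_def)

abbreviation cnt :: "nat \<Rightarrow> letter list \<Rightarrow> nat" where "cnt k v \<equiv> odd_count (take k v)"

definition hR :: "('a::ab_group_add) chain \<Rightarrow> 'a chain" where
  "hR F v = (\<Sum>k\<in>Ev v. sg (cnt k v) (F (v[k := (fst (v ! k), True)])))"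

lemma dR_sg: "dR F v = (\<Sum>k\<in>Od v. sg (cnt k v) (F (v[k := (fst (v ! k), False)])))"
  unfolding dR_def Od_def sg_def by simp

lemma oc_upd: "odd_count (xs[k:=x]) + (if k < length xs \<and> snd (xs!k) then 1 else 0)
   = odd_count xs + (if k < length xs \<and> snd x then 1 else 0)"
proof (induction xs arbitrary: k)
  case Nil then show ?case by simp
next
  case (Cons a xs) show ?case
  proof (cases k)
    case 0 then show ?thesis by (auto simp: odd_count_def)
  next
    case (Suc j) then show ?thesis using Cons.IH[of j] by (auto simp: odd_count_def split: if_splits)
  qed
qed

lemma cnt_upd: "k < length v \<Longrightarrow> cnt m (v[k:=x]) + (if k < m \<and> snd (v!k) then 1 else 0)
   = cnt m v + (if k < m \<and> snd x then 1 else 0)"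
proof (cases "m \<le> k")
  case True then show ?thesis by simp
next
  case False
  assume k: "k < length v"
  have "take m (v[k:=x]) = (take m v)[k:=x]" by (rule take_update_swap)
  moreover have "k < length (take m v)" using False k by simp
  moreover have "take m v ! k = v ! k" using False by simp
  ultimately show ?thesis using oc_upd[of "take m v" k x] False by simp
qed

lemma Ev_upd_e: "k \<in> Od v \<Longrightarrow> Ev (v[k := (a, False)]) = insert k (Ev v)"
  by (auto simp: Ev_def Od_def nth_list_update)
lemma Od_upd_o: "k \<in> Ev v \<Longrightarrow> Od (v[k := (a, True)]) = insert k (Od v)"
  by (auto simp: Ev_def Od_def nth_list_update)

lemma homotopy:
  "dR (hR F) v + hR (dR F) v = (\<Sum>k<length v. F v)"
proof -
  let ?e = "\<lambda>k w. w[k := (fst (w ! k), False)]"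
  let ?o = "\<lambda>k w. w[k := (fst (w ! k), True)]"
  define T1 where "T1 k m = sg (cnt k v) (sg (cnt m (?e k v)) (F (?o m (?e k v))))" for k m
  define T2 where "T2 m k = sg (cnt m v) (sg (cnt k (?o m v)) (F (?e k (?o m v))))" for k m
  have OE: "Od v \<inter> Ev v = {}" "Od v \<union> Ev v = {..<length v}" by (auto simp: Od_def Ev_def)
  have 1: "dR (hR F) v = (\<Sum>k\<in>Od v. F v) + (\<Sum>k\<in>Od v. \<Sum>m\<in>Ev v. T1 k m)"
  proof -
    have "dR (hR F) v = (\<Sum>k\<in>Od v. sg (cnt k v) (hR F (?e k v)))" by (rule dR_sg)
    also have "\<dots> = (\<Sum>k\<in>Od v. F v + (\<Sum>m\<in>Ev v. T1 k m))"
    proof (rule sum.cong[OF refl])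
      fix k assume k: "k \<in> Od v"
      have kl: "k < length v" "snd (v!k)" using k by (auto simp: Od_def)
      have ev: "Ev (?e k v) = insert k (Ev v)" using Ev_upd_e[OF k] .
      have kn: "k \<notin> Ev v" using k by (auto simp: Od_def Ev_def)
      have vv: "?o k (?e k v) = v" using kl by (cases "v!k") (auto simp: list_update_same_conv)
      have "hR F (?e k v) = sg (cnt k (?e k v)) (F (?o k (?e k v))) + (\<Sum>m\<in>Ev v. sg (cnt m (?e k v)) (F (?o m (?e k v))))"
        unfolding hR_def ev using kn by (simp add: sum.insert)
      also have "cnt k (?e k v) = cnt k v" by simp
      finally show "sg (cnt k v) (hR F (?e k v)) = F v + (\<Sum>m\<in>Ev v. T1 k m)"
        unfolding T1_def using vv by (simp add: sg_add sg_sum del: sg_sg)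
    qed
    finally show ?thesis by (simp add: sum.distrib)
  qed
  have 2: "hR (dR F) v = (\<Sum>m\<in>Ev v. F v) + (\<Sum>m\<in>Ev v. \<Sum>k\<in>Od v. T2 m k)"
  proof -
    have "hR (dR F) v = (\<Sum>m\<in>Ev v. sg (cnt m v) (dR F (?o m v)))" by (simp add: hR_def)
    also have "\<dots> = (\<Sum>m\<in>Ev v. F v + (\<Sum>k\<in>Od v. T2 m k))"
    proof (rule sum.cong[OF refl])
      fix m assume m: "m \<in> Ev v"
      have ml: "m < length v" "\<not> snd (v!m)" using m by (auto simp: Ev_def)
      have od: "Od (?o m v) = insert m (Od v)" using Od_upd_o[OF m] .
      have mn: "m \<notin> Od v" using m by (auto simp: Od_def Ev_def)
      have vv: "?e m (?o m v) = v" using ml by (cases "v!m") (auto simp: list_update_same_conv)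
      have "dR F (?o m v) = sg (cnt m (?o m v)) (F (?e m (?o m v))) + (\<Sum>k\<in>Od v. sg (cnt k (?o m v)) (F (?e k (?o m v))))"
        unfolding dR_sg od using mn by simp
      also have "cnt m (?o m v) = cnt m v" by simp
      finally show "sg (cnt m v) (dR F (?o m v)) = F v + (\<Sum>k\<in>Od v. T2 m k)"
        unfolding T2_def using vv by (simp add: sg_add sg_sum del: sg_sg)
    qed
    finally show ?thesis by (simp add: sum.distrib)
  qed
  have 3: "T1 k m + T2 m k = 0" if k: "k \<in> Od v" and m: "m \<in> Ev v" for k m
  proof -
    have kl: "k < length v" "snd (v!k)" using k by (auto simp: Od_def)
    have ml: "m < length v" "\<not> snd (v!m)" using m by (auto simp: Ev_def)
    have km: "k \<noteq> m" using kl ml by auto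
    have w: "?o m (?e k v) = ?e k (?o m v)" using km kl ml
      by (simp add: nth_list_update list_update_swap)
    have c1: "cnt m (?e k v) + (if k < m then 1 else 0) = cnt m v"
      using cnt_upd[of k v m "(fst (v ! k), False)"] kl by simp
    have c2: "cnt k (?o m v) = cnt k v + (if m < k then 1 else 0)"
      using cnt_upd[of m v k "(fst (v ! m), True)"] ml by simp
    show ?thesis
    proof (cases "k < m")
      case True
      then have "cnt m v = Suc (cnt m (?e k v))" using c1 by simp
      then show ?thesis unfolding T1_def T2_def w using c2 True
        by (simp add: sg_Suc sg_minus ac_simps)
    next
      case False
      then have "m < k" using km by simp
      then show ?thesis unfolding T1_def T2_def w using c1 c2
        by (simp add: sg_Suc sg_minus ac_simps)
    qed
  qed
  have "dR (hR F) v + hR (dR F) v = ((\<Sum>k\<in>Od v. F v) + (\<Sum>m\<in>Ev v. F v))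
      + (\<Sum>k\<in>Od v. \<Sum>m\<in>Ev v. T1 k m + T2 m k)"
    unfolding 1 2 sum.distrib by (simp add: sum.swap[of _ "Ev v"] ac_simps)
  also have "\<dots> = (\<Sum>k<length v. F v)"
    using 3 OE by (simp add: sum.union_disjoint[symmetric])
  finally show ?thesis .
qed

definition kz :: "(nat \<Rightarrow> nat) \<Rightarrow> letter list \<Rightarrow> nat" where
  "kz \<sigma> w = card {(a, b). a < b \<and> b < length w \<and> snd (w ! a) \<and> snd (w ! b) \<and> \<sigma> b < \<sigma> a}"

definition perm :: "(nat \<Rightarrow> nat) \<Rightarrow> nat \<Rightarrow> letter list \<Rightarrow> letter list" where
  "perm \<sigma> j v = map (\<lambda>i. v ! \<sigma> i) [0..<j]"

lemma koszul_kz: "koszul_odd \<sigma> w = odd (kz \<sigma> w)"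
  by (simp add: koszul_odd_def kz_def)

lemma cnt_card: "cnt p v = card {t. t < p \<and> t < length v \<and> snd (v ! t)}"
  by (auto simp: odd_count_def length_filter_conv_card intro!: arg_cong[where f=card])

lemma parity:
  assumes s: "\<sigma> permutes {0..<j}" and lv: "length v = j" and m: "m < j"
    and ev: "\<not> snd (perm \<sigma> j v ! m)"
  shows "even (cnt (\<sigma> m) v + kz \<sigma> ((perm \<sigma> j v)[m := (a, True)])) =
         even (kz \<sigma> (perm \<sigma> j v) + cnt m (perm \<sigma> j v))"
proof -
  define u where "u = perm \<sigma> j v"
  have lu: "length u = j" by (simp add: u_def perm_def)
  have un: "u ! i = v ! \<sigma> i" if "i < j" for i using that by (simp add: u_def perm_def)
  have inj: "inj \<sigma>" using s by (rule permutes_inj)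
  have sj: "\<sigma> i < j \<longleftrightarrow> i < j" for i using permutes_in_image[OF s, of i] by simp
  have evm: "\<not> snd (u ! m)" using ev by (simp add: u_def)
  define A where "A = {i. i < j \<and> snd (u ! i) \<and> \<sigma> i < \<sigma> m}"
  define B where "B = {i. i < m \<and> snd (u ! i)}"
  have fA: "finite A" and fB: "finite B" by (auto simp: A_def B_def)
  have cA: "cnt (\<sigma> m) v = card A"
  proof -
    have "{t. t < \<sigma> m \<and> t < length v \<and> snd (v ! t)} = \<sigma> ` A"
    proof (intro set_eqI iffI)
      fix t assume t: "t \<in> {t. t < \<sigma> m \<and> t < length v \<and> snd (v ! t)}"
      define i where "i = inv \<sigma> t"
      have ti: "\<sigma> i = t" using permutes_inverses(1)[OF s] by (simp add: i_def)
      have "i < j" using t ti sj lv by force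
      then show "t \<in> \<sigma> ` A" using t ti un unfolding A_def by force
    next
      fix t assume "t \<in> \<sigma> ` A"
      then show "t \<in> {t. t < \<sigma> m \<and> t < length v \<and> snd (v ! t)}"
        using un sj lv unfolding A_def by force
    qed
    then show ?thesis unfolding cnt_card using card_image[OF inj_on_subset[OF inj]] by simp
  qed
  have cB: "cnt m u = card B"
  proof -
    have "{t. t < m \<and> t < length u \<and> snd (u ! t)} = B" using lu m by (auto simp: B_def)
    then show ?thesis unfolding cnt_card by simp
  qed
  define K where "K = {(a, b). a < b \<and> b < length u \<and> snd (u ! a) \<and> snd (u ! b) \<and> \<sigma> b < \<sigma> a}"
  define u' where "u' = u[m := (a, True)]"
  have su': "snd (u' ! i) = (i = m \<or> snd (u ! i))" if "i < j" for i
    using that lu m by (auto simp: u'_def nth_list_update)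
  have lu': "length u' = j" using lu by (simp add: u'_def)
  define K' where "K' = {(a, b). a < b \<and> b < length u' \<and> snd (u' ! a) \<and> snd (u' ! b) \<and> \<sigma> b < \<sigma> a}"
  have KK: "K' = K \<union> ((\<lambda>a. (a, m)) ` (B - A) \<union> (\<lambda>b. (m, b)) ` (A - B))"
  proof (intro set_eqI iffI)
    fix p assume "p \<in> K'"
    then obtain x y where p: "p = (x, y)" "x < y" "y < j" "snd (u' ! x)" "snd (u' ! y)" "\<sigma> y < \<sigma> x"
      unfolding K'_def lu' by auto
    have xj: "x < j" using p by simp
    show "p \<in> K \<union> ((\<lambda>a. (a, m)) ` (B - A) \<union> (\<lambda>b. (m, b)) ` (A - B))"
    proof (cases "x = m")
      case True
      then have "y \<in> A - B" using p su'[of y] unfolding A_def B_def by auto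
      then show ?thesis using p True by blast
    next
      case False
      note xm = False
      show ?thesis
      proof (cases "y = m")
        case True
        then have "x \<in> B - A" using p su'[of x] xj xm unfolding A_def B_def by auto
        then show ?thesis using p True by blast
      next
        case False
        then have "p \<in> K" using p su'[of x] su'[of y] xj xm lu unfolding K_def by auto
        then show ?thesis by blast
      qed
    qed
  next
    fix p assume p: "p \<in> K \<union> ((\<lambda>a. (a, m)) ` (B - A) \<union> (\<lambda>b. (m, b)) ` (A - B))"
    have ne: "\<sigma> x \<noteq> \<sigma> m" if "x \<noteq> m" for x using inj that by (auto dest: injD)
    show "p \<in> K'"
    proof -
      { assume "p \<in> K" then have ?thesis using su' lu lu' unfolding K_def K'_def by auto }
      moreover
      { fix x assume x: "x \<in> B - A" "p = (x, m)"
        then have "x < m" "snd (u ! x)" "\<not> \<sigma> x < \<sigma> m" unfolding A_def B_def using m by auto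
        moreover have "\<sigma> x \<noteq> \<sigma> m" using ne \<open>x < m\<close> by simp
        ultimately have ?thesis using x su' lu lu' m unfolding K'_def by auto }
      moreover
      { fix x assume x: "x \<in> A - B" "p = (m, x)"
        then have "x < j" "snd (u ! x)" "\<sigma> x < \<sigma> m" "\<not> x < m" unfolding A_def B_def by auto
        moreover have "x \<noteq> m" using \<open>\<sigma> x < \<sigma> m\<close> by auto
        ultimately have ?thesis using x su' lu lu' m unfolding K'_def by auto }
      ultimately show ?thesis using p by blast
    qed
  qed
  have fK: "finite K" unfolding K_def
    by (rule finite_subset[of _ "{..<length u} \<times> {..<length u}"]) auto
  have mK: "(x, y) \<in> K \<Longrightarrow> x \<noteq> m \<and> y \<noteq> m" for x y using evm unfolding K_def by auto
  have cK': "card K' = card K + card (B - A) + card (A - B)"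
  proof -
    have d1: "K \<inter> ((\<lambda>a. (a, m)) ` (B - A) \<union> (\<lambda>b. (m, b)) ` (A - B)) = {}" using mK by blast
    have d2: "(\<lambda>a. (a, m)) ` (B - A) \<inter> (\<lambda>b. (m, b)) ` (A - B) = {}" unfolding A_def B_def by auto
    have i1: "card ((\<lambda>a. (a, m)) ` (B - A)) = card (B - A)" by (rule card_image) (auto intro: inj_onI)
    have i2: "card ((\<lambda>b. (m, b)) ` (A - B)) = card (A - B)" by (rule card_image) (auto intro: inj_onI)
    show ?thesis unfolding KK
      using card_Un_disjoint[OF fK _ d1] card_Un_disjoint[OF _ _ d2] fA fB i1 i2 by simp
  qed
  have "card A = card (A \<inter> B) + card (A - B)" using fA by (rule card_Int_Diff)
  moreover have "card B = card (B \<inter> A) + card (B - A)" using fB by (rule card_Int_Diff)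
  moreover have "B \<inter> A = A \<inter> B" by blast
  moreover have "kz \<sigma> u' = card K'" by (simp add: kz_def K'_def)
  moreover have "kz \<sigma> u = card K" by (simp add: kz_def K_def)
  ultimately show ?thesis using cA cB cK' unfolding u_def[symmetric] u'_def[symmetric] by (simp, blast)
qed

lemma sg_cong: "even a = even b \<Longrightarrow> sg a x = sg b x"
  by (simp add: sg_def)

lemma perm_len[simp]: "length (perm \<sigma> j v) = j" by (simp add: perm_def)
lemma perm_nth: "i < j \<Longrightarrow> perm \<sigma> j v ! i = v ! \<sigma> i" by (simp add: perm_def)

lemma perm_upd:
  assumes s: "\<sigma> permutes {0..<j}" and lv: "length v = j" and m: "m < j"
  shows "perm \<sigma> j (v[\<sigma> m := x]) = (perm \<sigma> j v)[m := x]"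
proof (rule nth_equalityI)
  show "length (perm \<sigma> j (v[\<sigma> m := x])) = length ((perm \<sigma> j v)[m := x])" by simp
next
  fix i assume "i < length (perm \<sigma> j (v[\<sigma> m := x]))"
  then have i: "i < j" by simp
  have sj: "\<sigma> i < j" using permutes_in_image[OF s, of i] i by simp
  have "\<sigma> i = \<sigma> m \<longleftrightarrow> i = m" "\<sigma> m = \<sigma> i \<longleftrightarrow> m = i" using permutes_inj[OF s] by (auto dest: injD)
  then show "perm \<sigma> j (v[\<sigma> m := x]) ! i = (perm \<sigma> j v)[m := x] ! i"
    using i sj lv m by (simp add: perm_nth nth_list_update)
qed

lemma Ev_perm:
  assumes s: "\<sigma> permutes {0..<j}" and lv: "length v = j"
  shows "Ev v = \<sigma> ` Ev (perm \<sigma> j v)"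
proof (intro set_eqI iffI)
  have sj: "\<sigma> i < j \<longleftrightarrow> i < j" for i using permutes_in_image[OF s, of i] by simp
  fix k assume k: "k \<in> Ev v"
  define i where "i = inv \<sigma> k"
  have ti: "\<sigma> i = k" using permutes_inverses(1)[OF s] by (simp add: i_def)
  have "i < j" using k ti sj lv by (force simp: Ev_def)
  then show "k \<in> \<sigma> ` Ev (perm \<sigma> j v)" using k ti by (force simp: Ev_def perm_nth)
next
  have sj: "\<sigma> i < j \<longleftrightarrow> i < j" for i using permutes_in_image[OF s, of i] by simp
  fix k assume "k \<in> \<sigma> ` Ev (perm \<sigma> j v)"
  then show "k \<in> Ev v" using sj lv by (force simp: Ev_def perm_nth)
qed

locale sp =
  fixes scale :: "rat \<Rightarrow> 'a::ab_group_add \<Rightarrow> 'a" and P :: "nat \<Rightarrow> 'a set"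
    and act :: "nat \<Rightarrow> (nat \<Rightarrow> nat) \<Rightarrow> 'a \<Rightarrow> 'a"
  assumes spc: "species scale P act"
begin

lemma vs: "vector_space scale" using spc by (simp add: species_def)

sublocale vector_space scale by (rule vs)

lemma subP: "subspace (P j)" using spc by (simp add: species_def)
lemma P0: "P 0 = {0}" using spc by (simp add: species_def)

context fixes \<sigma> :: "nat \<Rightarrow> nat" and j :: nat assumes s: "\<sigma> permutes {0..<j}"
begin
lemma act_mem: "p \<in> P j \<Longrightarrow> act j \<sigma> p \<in> P j" using spc s by (simp add: species_def)
lemma act_add: "p \<in> P j \<Longrightarrow> q \<in> P j \<Longrightarrow> act j \<sigma> (p + q) = act j \<sigma> p + act j \<sigma> q"
  using spc s by (simp add: species_def)
lemma act_zero: "act j \<sigma> 0 = 0"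
proof -
  have "act j \<sigma> (0 + 0) = act j \<sigma> 0 + act j \<sigma> 0" using act_add subspace_0[OF subP] by blast
  then show ?thesis by simp
qed
lemma act_neg: "p \<in> P j \<Longrightarrow> act j \<sigma> (- p) = - act j \<sigma> p"
proof -
  assume p: "p \<in> P j"
  have "act j \<sigma> (p + - p) = act j \<sigma> p + act j \<sigma> (- p)" using act_add p subspace_neg[OF subP p] by blast
  then show ?thesis using act_zero by (simp add: eq_neg_iff_add_eq_0 add.commute)
qed
lemma act_sg: "p \<in> P j \<Longrightarrow> act j \<sigma> (sg c p) = sg c (act j \<sigma> p)"
  using act_neg by (simp add: sg_def)
lemma act_sum: "(\<And>x. x \<in> A \<Longrightarrow> f x \<in> P j) \<Longrightarrow> act j \<sigma> (sum f A) = (\<Sum>x\<in>A. act j \<sigma> (f x))"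
proof (induction A rule: infinite_finite_induct)
  case (infinite A) then show ?case using act_zero by simp
next
  case empty then show ?case using act_zero by simp
next
  case (insert x F)
  have "f x \<in> P j" "sum f F \<in> P j" using insert.prems subspace_sum[OF subP, of F f] by auto
  then show ?case using insert act_add by simp
qed
end

lemma sg_mem: "p \<in> P j \<Longrightarrow> sg c p \<in> P j"
  using subspace_neg[OF subP] by (simp add: sg_def)

lemma sact_eq: "length w = j \<Longrightarrow>
   sact act j \<sigma> G w = sg (kz \<sigma> (perm \<sigma> j w)) (act j \<sigma> (G (perm \<sigma> j w)))"
  by (simp add: sact_def Let_def koszul_kz sg_def perm_def)

lemma hR_sact:
  assumes s: "\<sigma> permutes {0..<j}" and H: "\<And>u. length u = j \<Longrightarrow> H u \<in> P j"
  shows "hR (sact act j \<sigma> H) v = sact act j \<sigma> (hR H) v"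
proof (cases "length v = j")
  case False
  then show ?thesis by (simp add: hR_def sact_def)
next
  case True
  define u where "u = perm \<sigma> j v"
  have lu: "length u = j" by (simp add: u_def)
  have sj: "\<sigma> i < j \<longleftrightarrow> i < j" for i using permutes_in_image[OF s, of i] by simp
  have Hm: "H (u[m := x]) \<in> P j" for m x using H lu by simp
  have "hR (sact act j \<sigma> H) v = (\<Sum>k\<in>\<sigma> ` Ev u. sg (cnt k v) (sact act j \<sigma> H (v[k := (fst (v ! k), True)])))"
    unfolding hR_def u_def using Ev_perm[OF s True] by simp
  also have "\<dots> = (\<Sum>m\<in>Ev u. sg (cnt (\<sigma> m) v) (sact act j \<sigma> H (v[\<sigma> m := (fst (v ! \<sigma> m), True)])))"
    by (rule sum.reindex[OF inj_on_subset[OF permutes_inj[OF s]], simplified])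
  also have "\<dots> = (\<Sum>m\<in>Ev u. sg (kz \<sigma> u + cnt m u) (act j \<sigma> (H (u[m := (fst (u ! m), True)]))))"
  proof (rule sum.cong[OF refl])
    fix m assume m: "m \<in> Ev u"
    have mj: "m < j" and ev: "\<not> snd (u ! m)" using m lu by (auto simp: Ev_def)
    have um: "u ! m = v ! \<sigma> m" using mj by (simp add: u_def perm_nth)
    have pu: "perm \<sigma> j (v[\<sigma> m := (fst (v ! \<sigma> m), True)]) = u[m := (fst (u ! m), True)]"
      using perm_upd[OF s True mj] um by (simp add: u_def)
    have "sact act j \<sigma> H (v[\<sigma> m := (fst (v ! \<sigma> m), True)]) =
        sg (kz \<sigma> (u[m := (fst (u ! m), True)])) (act j \<sigma> (H (u[m := (fst (u ! m), True)])))"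
      using sact_eq[of "v[\<sigma> m := (fst (v ! \<sigma> m), True)]" j] True pu by simp
    moreover have "even (cnt (\<sigma> m) v + kz \<sigma> (u[m := (fst (u ! m), True)])) = even (kz \<sigma> u + cnt m u)"
      using parity[OF s True mj, of "fst (u ! m)"] ev by (simp add: u_def)
    ultimately show "sg (cnt (\<sigma> m) v) (sact act j \<sigma> H (v[\<sigma> m := (fst (v ! \<sigma> m), True)])) =
         sg (kz \<sigma> u + cnt m u) (act j \<sigma> (H (u[m := (fst (u ! m), True)])))"
      apply (simp only: sg_sg)
      apply (rule sg_cong)
      by simp
  qed
  also have "\<dots> = sg (kz \<sigma> u) (act j \<sigma> (hR H u))"
    unfolding hR_def using Hm
    by (simp add: act_sum[OF s] sg_mem act_sg[OF s] sg_sum)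
  also have "\<dots> = sact act j \<sigma> (hR H) v"
    using sact_eq[OF True] by (simp add: u_def)
  finally show ?thesis .
qed

end

lemma hR_nz: "hR F v \<noteq> 0 \<Longrightarrow> \<exists>k\<in>Ev v. F (v[k := (fst (v ! k), True)]) \<noteq> 0"
proof (rule ccontr)
  assume nz: "hR F v \<noteq> 0" and "\<not> (\<exists>k\<in>Ev v. F (v[k := (fst (v ! k), True)]) \<noteq> 0)"
  then have "\<forall>k\<in>Ev v. sg (cnt k v) (F (v[k := (fst (v ! k), True)])) = 0" by simp
  then have "hR F v = 0" unfolding hR_def by (rule sum.neutral)
  then show False using nz by simp
qed

lemma upd_back: "k \<in> Ev v \<Longrightarrow> (v[k := (fst (v ! k), True)])[k := (fst ((v[k := (fst (v ! k), True)]) ! k), False)] = v"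
  by (cases "v ! k") (auto simp: Ev_def list_update_same_conv)

lemma oc_o: "k \<in> Ev v \<Longrightarrow> odd_count (v[k := (a, True)]) = odd_count v + 1"
  using oc_upd[of v k "(a, True)"] by (simp add: Ev_def)

lemma sg_diff: "sg a (x - y) = sg a x - sg a y" by (simp add: sg_def)

context sp
begin

lemma sg_scale: "sg a (scale c x) = scale c (sg a x)"
  by (simp add: sg_def)

lemma hR_mem: "is_chain n P F \<Longrightarrow> hR F v \<in> P (length v)"
proof -
  assume c: "is_chain n P F"
  have *: "F (v[k := x]) \<in> P (length v)" for k x
  proof -
    have "F (v[k := x]) \<in> P (length (v[k := x]))" using c unfolding is_chain_def by blast
    then show ?thesis by simp
  qed
  show ?thesis unfolding hR_def by (rule subspace_sum[OF subP], rule sg_mem, rule *)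
qed

lemma hR_letters: "is_chain n P F \<Longrightarrow> hR F v \<noteq> 0 \<Longrightarrow> l \<in> set v \<Longrightarrow> fst l < n"
proof -
  assume c: "is_chain n P F" and nz: "hR F v \<noteq> 0" and l: "l \<in> set v"
  obtain k where k: "k \<in> Ev v" and w: "F (v[k := (fst (v ! k), True)]) \<noteq> 0" using hR_nz[OF nz] by blast
  have L: "\<forall>l\<in>set (v[k := (fst (v ! k), True)]). fst l < n" using c w by (simp add: is_chain_def)
  obtain i where i: "i < length v" "l = v ! i" using l by (auto simp: in_set_conv_nth)
  show "fst l < n"
  proof (cases "i = k")
    case True
    have "(fst (v!k), True) \<in> set (v[k := (fst (v ! k), True)])" using k by (simp add: Ev_def set_update_memI)
    then show ?thesis using L i True by auto
  next
    case False
    then have "v[k := (fst (v ! k), True)] ! i = l" using i by simp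
    then show ?thesis using L i by (metis length_list_update nth_mem)
  qed
qed

lemma hR_fin: "is_chain n P F \<Longrightarrow> finite {v. hR F v \<noteq> 0}"
proof -
  assume c: "is_chain n P F"
  let ?S = "\<Union>w\<in>{w. F w \<noteq> 0}. (\<lambda>k. w[k := (fst (w ! k), False)]) ` {..<length w}"
  have "{v. hR F v \<noteq> 0} \<subseteq> ?S"
  proof
    fix v assume "v \<in> {v. hR F v \<noteq> 0}"
    then obtain k where k: "k \<in> Ev v" and w: "F (v[k := (fst (v ! k), True)]) \<noteq> 0" using hR_nz by blast
    have "k < length (v[k := (fst (v ! k), True)])" using k by (simp add: Ev_def)
    then show "v \<in> ?S" using w upd_back[OF k] by (auto intro!: bexI[of _ "v[k := (fst (v ! k), True)]"] image_eqI[of _ _ k])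
  qed
  moreover have "finite ?S" using c by (simp add: is_chain_def)
  ultimately show ?thesis by (rule finite_subset)
qed

lemma hR_chain: "is_chain n P F \<Longrightarrow> is_chain n P (hR F)"
  using hR_fin hR_mem hR_letters unfolding is_chain_def[of n P "hR F"] by blast

lemma hR_len: "(\<And>w. F w \<noteq> 0 \<Longrightarrow> length w = j) \<Longrightarrow> hR F v \<noteq> 0 \<Longrightarrow> length v = j"
  using hR_nz by fastforce

lemma hR_deg: "F \<in> chain_deg n P k \<Longrightarrow> hR F v \<noteq> 0 \<Longrightarrow> odd_count v = k - 1"
proof -
  assume F: "F \<in> chain_deg n P k" and nz: "hR F v \<noteq> 0"
  obtain i where i: "i \<in> Ev v" and w: "F (v[i := (fst (v ! i), True)]) \<noteq> 0" using hR_nz[OF nz] by blast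
  have "odd_count (v[i := (fst (v ! i), True)]) = k" using F w by (simp add: chain_deg_def)
  then show ?thesis using oc_o[OF i] by simp
qed

lemma coinv_scale_len:
  "X \<in> coinv_rel scale act n P \<Longrightarrow> (\<lambda>v. scale (f (length v)) (X v)) \<in> coinv_rel scale act n P"
proof (induction rule: coinv_rel.induct)
  case zero then show ?case by (simp add: coinv_rel.zero)
next
  case (add F G)
  then show ?case using coinv_rel.add[OF add.IH] by (simp add: scale_right_distrib)
next
  case (smult F c)
  then show ?case using coinv_rel.smult[OF smult.IH, of c] by (simp add: scale_left_commute mult.commute)
next
  case (gen H j \<sigma>)
  have "(\<lambda>v. scale (f (length v)) (H v - sact act j \<sigma> H v)) = (\<lambda>v. scale (f j) (H v - sact act j \<sigma> H v))"
  proof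
    fix v show "scale (f (length v)) (H v - sact act j \<sigma> H v) = scale (f j) (H v - sact act j \<sigma> H v)"
      using gen.hyps(2)[rule_format, of v] by (cases "length v = j") (auto simp: sact_def)
  qed
  then show ?case using coinv_rel.smult[OF coinv_rel.gen[OF gen.hyps]] by simp
qed

lemma coinv_hR:
  "X \<in> coinv_rel scale act n P \<Longrightarrow> hR X \<in> coinv_rel scale act n P"
proof (induction rule: coinv_rel.induct)
  case zero
  have "hR (\<lambda>_. 0::'a) = (\<lambda>_. 0)" by (simp add: hR_def fun_eq_iff)
  then show ?case using coinv_rel.zero[of scale act n P] by simp
next
  case (add F G)
  have "hR (\<lambda>w. F w + G w) = (\<lambda>w. hR F w + hR G w)"
    by (simp add: hR_def fun_eq_iff sg_add sum.distrib)
  then show ?case using coinv_rel.add[OF add.IH] by simp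
next
  case (smult F c)
  have "hR (\<lambda>w. scale c (F w)) = (\<lambda>w. scale c (hR F w))"
    by (simp add: hR_def fun_eq_iff sg_scale scale_sum_right)
  then show ?case using coinv_rel.smult[OF smult.IH, of c] by simp
next
  case (gen H j \<sigma>)
  have Hm: "\<And>u. length u = j \<Longrightarrow> H u \<in> P j" using gen.hyps(1) by (auto simp: is_chain_def)
  have "hR (\<lambda>w. H w - sact act j \<sigma> H w) = (\<lambda>w. hR H w - hR (sact act j \<sigma> H) w)"
    by (simp add: hR_def fun_eq_iff sg_diff sum_subtractf)
  also have "\<dots> = (\<lambda>w. hR H w - sact act j \<sigma> (hR H) w)"
    using hR_sact[OF gen.hyps(3) Hm] by simp
  finally have e: "hR (\<lambda>w. H w - sact act j \<sigma> H w) = (\<lambda>w. hR H w - sact act j \<sigma> (hR H) w)" .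
  have "\<forall>w. hR H w \<noteq> 0 \<longrightarrow> length w = j" using hR_len[of H j] gen.hyps(2) by blast
  then show ?case unfolding e using coinv_rel.gen[OF hR_chain[OF gen.hyps(1)] _ gen.hyps(3)] by blast
qed

lemma sum_const_scale: "(\<Sum>k<m. x) = scale (of_nat m) x"
  by (induction m) (simp_all add: scale_left_distrib)

end

theorem lemma6p2:
  fixes scale :: "rat \<Rightarrow> 'a::ab_group_add \<Rightarrow> 'a"
    and P :: "nat \<Rightarrow> 'a set"
    and act :: "nat \<Rightarrow> (nat \<Rightarrow> nat) \<Rightarrow> 'a \<Rightarrow> 'a"
    and n k :: nat
    and F :: "'a chain"
  assumes "species scale P act"
    and "n \<ge> 1"
    and "F \<in> chain_deg n P k"
    and "dR F \<in> coinv_rel scale act n P"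
  shows "if k = 0 then F \<in> coinv_rel scale act n P
         else (\<exists>G \<in> chain_deg n P (k - 1). (\<lambda>w. F w - dR G w) \<in> coinv_rel scale act n P)"
proof -
  interpret sp scale P act by unfold_locales (rule assms(1))
  have Fc: "is_chain n P F" and Fd: "\<And>w. F w \<noteq> 0 \<Longrightarrow> odd_count w = k"
    using assms(3) by (auto simp: chain_deg_def)
  define c where "c = (\<lambda>l::nat. 1 / (of_nat l :: rat))"
  define G where "G = (\<lambda>v. scale (c (length v)) (hR F v))"
  have key: "(\<lambda>w. F w - dR G w) = (\<lambda>v. scale (c (length v)) (hR (dR F) v))"
  proof
    fix v
    have dG: "dR G v = scale (c (length v)) (dR (hR F) v)"
      unfolding dR_sg G_def by (simp add: sg_scale scale_sum_right)
    have hom: "dR (hR F) v + hR (dR F) v = scale (of_nat (length v)) (F v)"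
      using homotopy[of F v] sum_const_scale by simp
    show "F v - dR G v = scale (c (length v)) (hR (dR F) v)"
    proof (cases "length v = 0")
      case True
      have "F v \<in> P (length v)" using Fc by (auto simp: is_chain_def)
      then have "F v = 0" using True P0 by simp
      moreover have "v = []" using True by simp
      ultimately show ?thesis by (simp add: dR_sg hR_def Od_def Ev_def)
    next
      case False
      have "dR (hR F) v = scale (of_nat (length v)) (F v) - hR (dR F) v" using hom by (simp add: eq_diff_eq)
      then have "dR G v = scale (c (length v) * of_nat (length v)) (F v) - scale (c (length v)) (hR (dR F) v)"
        using dG by (simp add: scale_right_diff_distrib)
      also have "c (length v) * of_nat (length v) = 1" using False by (simp add: c_def)
      finally show ?thesis by simp
    qed
  qed
  have R: "(\<lambda>w. F w - dR G w) \<in> coinv_rel scale act n P"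
    unfolding key by (rule coinv_scale_len[OF coinv_hR[OF assms(4)]])
  show ?thesis
  proof (cases "k = 0")
    case True
    have h0: "hR F v = 0" for v
    proof (rule ccontr)
      assume "hR F v \<noteq> 0"
      then obtain i where i: "i \<in> Ev v" and w: "F (v[i := (fst (v ! i), True)]) \<noteq> 0" using hR_nz by blast
      then show False using Fd[OF w] oc_o[OF i] True by simp
    qed
    then have "dR G v = 0" for v by (simp add: G_def dR_sg)
    then have "F = (\<lambda>w. F w - dR G w)" by simp
    then show ?thesis using R True by simp
  next
    case False
    have GZ: "G w \<noteq> 0 \<Longrightarrow> hR F w \<noteq> 0" for w by (auto simp: G_def)
    have "G \<in> chain_deg n P (k - 1)"
      unfolding chain_deg_def is_chain_def
    proof (intro CollectI conjI allI impI ballI)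
      show "finite {w. G w \<noteq> 0}"
        by (rule finite_subset[OF _ hR_fin[OF Fc]]) (use GZ in blast)
    next
      fix w show "G w \<in> P (length w)" unfolding G_def
        by (rule subspace_scale[OF subP], rule hR_mem[OF Fc])
    next
      fix w l assume "G w \<noteq> 0" "l \<in> set w"
      then show "fst l < n" using hR_letters[OF Fc] GZ by blast
    next
      fix w assume "G w \<noteq> 0"
      then show "odd_count w = k - 1" using hR_deg[OF assms(3)] GZ by blast
    qed
    then show ?thesis using R False by auto
  qed
qed

end
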